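(* Assume (A1)–(A6), and let $u^*(r)=u^*_{\lambda^*}(r(\lambda^* )^{-1/\theta})$, where $(u^*_{\lambda^*},\lambda^* )$ is the singular solution of Theorem 1.1 (so $u^*$ is a singular solution of $L(u)+e^{f(u)}=0$). Then $$u^*(r)=\mathcal F^{-1}\big(K r^{\theta/(\beta+1)}(1+\delta(r))\big),\qquad K=\frac{\beta+1}{\theta}(\alpha-\beta-1)^{-\frac{1}{\beta+1}},$$ where $\delta(r)\to0$ as $r\to0^+$.
   Context: $L(u)(r)=r^{-\gamma}(r^{\alpha}|u'|^{\beta}u')'$, $\theta=\gamma+2+\beta-\alpha$, $g=f^{-1}$, $\mathcal F(u)=\int_u^{\infty}e^{-f(s)/(\beta+1)}ds$ (finite and strictly decreasing under the assumptions). "$O(g''(t))$" means bounded by $C|g''(t)|$ for large $t$, $o(t)$ any $h$ with $h/t\to0$. (A1) $f\in C^4([0,\infty))$, $f'>0$, $f\to+\infty$. (A2) $g''(t)\to0$ and $f(g(t)+\varepsilon(t))/t\to1$ for every $\varepsilon(t)=O(g''(t))$. (A3) $g'(t)/g'(t+h(t))\to1$ for $h=o(t)$. (A4) $\frac{g''(t)}{g'(t)}\ln g'(t)\to0$. (A5)(a) $g'''(\ln g')^n=O(g'')$, $n=0,1,2$, $g^{(4)}\ln g'=O(g'')$; (b) $\sup_{s\ge t}|g''(s)|=O(g''(t))$, $g''(t+h(t))=O(g''(t))$ for $h=o(t)$. (A6) $\alpha>\beta+1$, $\beta\ge0$, $\theta>0$. Theorem 1.1: there exist $\lambda^*>0$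 and $u^*_{\lambda^*}\in C^2((0,1])$ with $L(u)+\lambda^*e^{f(u)}=0$ on $(0,1)$, $u(1)=0$, $u(r)\to+\infty$ as $r\to0^+$, and $u^*_{\lambda^*}(r)=g(Z(r))+O(g''(\ln r^{-\theta}))$, $Z(r)=\ln\{\theta^{\beta+1}(\alpha-\beta-1)\}-\ln\lambda^*-\theta\ln r+(\beta+1)\ln\{g'(\tau)+(\beta+1)g''(\tau)\ln g'(\tau)\}$, $\tau=\ln\frac{\beta+1}{\lambda^*r^\theta}$. *)

theory Defs
  imports "HOL-Analysis.Analysis" "HOL-Library.Landau_Symbols"
begin

definition C_n_on :: "nat \<Rightarrow> real set \<Rightarrow> (real \<Rightarrow> real) \<Rightarrow> (nat \<Rightarrow> real \<Rightarrow> real) \<Rightarrow> bool" where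
  "C_n_on n S f D \<longleftrightarrow> D 0 = f \<and>
     (\<forall>k<n. \<forall>x\<in>S. (D k has_real_derivative D (Suc k) x) (at x within S)) \<and>
     continuous_on S (D n)"

definition ginv :: "(real \<Rightarrow> real) \<Rightarrow> real \<Rightarrow> real" where
  "ginv f = the_inv_into {0..} f"

definition gd :: "(real \<Rightarrow> real) \<Rightarrow> nat \<Rightarrow> real \<Rightarrow> real" where
  "gd f k = (deriv ^^ k) (ginv f)"

definition Fcal :: "(real \<Rightarrow> real) \<Rightarrow> real \<Rightarrow> real \<Rightarrow> real" where
  "Fcal f \<beta> u = (LINT s:{u..}|lborel. exp (- f s / (\<beta> + 1)))"

definition Lop :: "real \<Rightarrow> real \<Rightarrow> real \<Rightarrow> (real \<Rightarrow> real) \<Rightarrow> real \<Rightarrow> real" where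
  "Lop \<alpha> \<beta> \<gamma> u r = r powr (- \<gamma>) *
     deriv (\<lambda>s. s powr \<alpha> * \<bar>deriv u s\<bar> powr \<beta> * deriv u s) r"

definition theta :: "real \<Rightarrow> real \<Rightarrow> real \<Rightarrow> real" where
  "theta \<alpha> \<beta> \<gamma> = \<gamma> + 2 + \<beta> - \<alpha>"

definition assumptions_A :: "(real \<Rightarrow> real) \<Rightarrow> real \<Rightarrow> real \<Rightarrow> real \<Rightarrow> bool" where
  "assumptions_A f \<alpha> \<beta> \<gamma> \<longleftrightarrow>
    \<comment> \<open>(A1)\<close>
    (\<exists>D. C_n_on 4 {0..} f D \<and> (\<forall>x\<ge>0. D 1 x > 0)) \<and> filterlim f at_top at_top \<and>
    \<comment> \<open>(A2)\<close>
    (gd f 2 \<longlongrightarrow> 0) at_top \<and>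
    (\<forall>\<epsilon>. \<epsilon> \<in> O[at_top](gd f 2) \<longrightarrow>
        ((\<lambda>t. f (ginv f t + \<epsilon> t) / t) \<longlongrightarrow> 1) at_top) \<and>
    \<comment> \<open>(A3)\<close>
    (\<forall>h. h \<in> o[at_top](\<lambda>t. t) \<longrightarrow>
        ((\<lambda>t. gd f 1 t / gd f 1 (t + h t)) \<longlongrightarrow> 1) at_top) \<and>
    \<comment> \<open>(A4)\<close>
    ((\<lambda>t. gd f 2 t / gd f 1 t * ln (gd f 1 t)) \<longlongrightarrow> 0) at_top \<and>
    \<comment> \<open>(A5)(a)\<close>
    (\<forall>n::nat. n \<le> 2 \<longrightarrow> (\<lambda>t. gd f 3 t * (ln (gd f 1 t)) ^ n) \<in> O[at_top](gd f 2)) \<and>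
    (\<lambda>t. gd f 4 t * ln (gd f 1 t)) \<in> O[at_top](gd f 2) \<and>
    \<comment> \<open>(A5)(b)\<close>
    (\<lambda>t. Sup {\<bar>gd f 2 s\<bar> | s. s \<ge> t}) \<in> O[at_top](gd f 2) \<and>
    (\<forall>h. h \<in> o[at_top](\<lambda>t. t) \<longrightarrow> (\<lambda>t. gd f 2 (t + h t)) \<in> O[at_top](gd f 2)) \<and>
    \<comment> \<open>(A6)\<close>
    \<alpha> > \<beta> + 1 \<and> \<beta> \<ge> 0 \<and> theta \<alpha> \<beta> \<gamma> > 0"

definition Zfun :: "(real \<Rightarrow> real) \<Rightarrow> real \<Rightarrow> real \<Rightarrow> real \<Rightarrow> real \<Rightarrow> real \<Rightarrow> real" where
  "Zfun f \<alpha> \<beta> \<gamma> lam r =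
    (let \<theta> = theta \<alpha> \<beta> \<gamma>; \<tau> = ln ((\<beta> + 1) / (lam * r powr \<theta>)) in
     ln (\<theta> powr (\<beta> + 1) * (\<alpha> - \<beta> - 1)) - ln lam - \<theta> * ln r
       + (\<beta> + 1) * ln (gd f 1 \<tau> + (\<beta> + 1) * gd f 2 \<tau> * ln (gd f 1 \<tau>)))"

definition singular_solution_thm11 ::
  "(real \<Rightarrow> real) \<Rightarrow> real \<Rightarrow> real \<Rightarrow> real \<Rightarrow> real \<Rightarrow> (real \<Rightarrow> real) \<Rightarrow> bool" where
  "singular_solution_thm11 f \<alpha> \<beta> \<gamma> lam u \<longleftrightarrow>
    lam > 0 \<and>
    (\<exists>D. C_n_on 2 {0<..1} u D) \<and>
    (\<forall>r\<in>{0<..<1}.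
       (\<lambda>s. s powr \<alpha> * \<bar>deriv u s\<bar> powr \<beta> * deriv u s) differentiable (at r) \<and>
       Lop \<alpha> \<beta> \<gamma> u r + lam * exp (f (u r)) = 0) \<and>
    u 1 = 0 \<and>
    filterlim u at_top (at_right 0) \<and>
    (\<lambda>r. u r - ginv f (Zfun f \<alpha> \<beta> \<gamma> lam r))
       \<in> O[at_right 0](\<lambda>r. gd f 2 (ln (r powr (- theta \<alpha> \<beta> \<gamma>))))"

end

theory Submission
  imports Defs
begin


lemma within_to_at:
  assumes "(h has_real_derivative d) (at x within {0..})" "(x::real) > 0"
  shows "(h has_real_derivative d) (at x)"
proof -
  have "(h has_real_derivative d) (at x within {0<..})"
    using assms(1) by (rule has_field_derivative_subset) auto
  moreover have "at x within {0<..} = at x" by (rule at_within_open) (use assms(2) in auto)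
  ultimately show ?thesis by simp
qed

locale fctx =
  fixes f :: "real \<Rightarrow> real" and D :: "nat \<Rightarrow> real \<Rightarrow> real"
  assumes Cn: "C_n_on 4 {0..} f D" and D1pos: "\<And>x. x \<ge> 0 \<Longrightarrow> D 1 x > 0"
    and flim: "filterlim f at_top at_top"
begin

lemma D0: "D 0 = f" using Cn by (simp add: C_n_on_def)

lemma Dk_within: "k < 4 \<Longrightarrow> x \<ge> 0 \<Longrightarrow> (D k has_real_derivative D (Suc k) x) (at x within {0..})"
  using Cn by (auto simp: C_n_on_def)

lemma Dk_at: "k < 4 \<Longrightarrow> x > 0 \<Longrightarrow> (D k has_real_derivative D (Suc k) x) (at x)"
  by (rule within_to_at[OF Dk_within]) auto

lemma f_at: "x > 0 \<Longrightarrow> (f has_real_derivative D 1 x) (at x)"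
  using Dk_at[of 0 x] by (simp add: D0)

lemma D1_at: "x > 0 \<Longrightarrow> (D 1 has_real_derivative D 2 x) (at x)"
  using Dk_at[of 1 x] by (simp add: numeral_2_eq_2)

lemma D2_at: "x > 0 \<Longrightarrow> (D 2 has_real_derivative D 3 x) (at x)"
  using Dk_at[of 2 x] by (simp add: numeral_2_eq_2 numeral_3_eq_3)

lemma f_cont: "continuous_on {0..} f"
  unfolding continuous_on_eq_continuous_within
proof (intro ballI)
  fix x :: real assume "x \<in> {0..}"
  thus "continuous (at x within {0..}) f" using DERIV_continuous[OF Dk_within[of 0 x]] by (simp add: D0)
qed

lemma f_isCont: "x > 0 \<Longrightarrow> isCont f x"
  using f_at DERIV_isCont by blast

lemma D1_isCont: "x > 0 \<Longrightarrow> isCont (D 1) x"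
  using D1_at DERIV_isCont by blast

lemma D2_isCont: "x > 0 \<Longrightarrow> isCont (D 2) x"
  using D2_at DERIV_isCont by blast

lemma f_less: assumes "0 \<le> a" "a < b" shows "f a < f b"
proof -
  have c: "continuous_on {a..b} f" using f_cont by (rule continuous_on_subset) (use assms in auto)
  have d: "\<And>x. a < x \<Longrightarrow> x < b \<Longrightarrow> f differentiable (at x)"
  proof -
    fix x assume "a < x" "x < b"
    hence "x > 0" using assms by linarith
    thus "f differentiable (at x)" using f_at real_differentiable_def by blast
  qed
  obtain l z where lz: "a < z" "z < b" "DERIV f z :> l" "f b - f a = (b - a) * l"
    using MVT[OF assms(2) c d] by blast
  have z0: "z > 0" using lz(1) assms(1) by linarith
  have "l = D 1 z" using DERIV_unique[OF lz(3) f_at[OF z0]] .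
  moreover have "D 1 z > 0" using D1pos z0 by simp
  ultimately have "(b - a) * l > 0" using assms(2) by simp
  thus ?thesis using lz(4) by linarith
qed

lemma f_le_iff: assumes "0 \<le> a" "0 \<le> b" shows "f a \<le> f b \<longleftrightarrow> a \<le> b"
proof
  assume "f a \<le> f b"
  show "a \<le> b"
  proof (rule ccontr)
    assume "\<not> a \<le> b" hence "b < a" by simp
    hence "f b < f a" using f_less assms by blast
    thus False using \<open>f a \<le> f b\<close> by simp
  qed
next
  assume "a \<le> b"
  thus "f a \<le> f b" using f_less[of a b] assms by (cases "a = b") auto
qed

lemma f_inj: "inj_on f {0..}"
proof (rule inj_onI)
  fix x y assume "x \<in> {0..}" "y \<in> {0..}" "f x = f y"
  thus "x = y" using f_le_iff[of x y] f_le_iff[of y x] by auto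
qed

lemma f_onto: assumes "y \<ge> f 0" shows "y \<in> f ` {0..}"
proof -
  have "eventually (\<lambda>x. y \<le> f x) at_top" using flim by (simp add: filterlim_at_top)
  then obtain N where N: "\<And>n. n \<ge> N \<Longrightarrow> y \<le> f n" by (auto simp: eventually_at_top_linorder)
  define b where "b = max N 0"
  have b: "b \<ge> 0" "f b \<ge> y" using N by (auto simp: b_def)
  have "continuous_on {0..b} f" using f_cont by (rule continuous_on_subset) auto
  then obtain x where "0 \<le> x" "x \<le> b" "f x = y" using IVT'[of f 0 y b] b assms by auto
  thus ?thesis by auto
qed

abbreviation "g \<equiv> ginv f"

lemma g_f: "x \<ge> 0 \<Longrightarrow> g (f x) = x"
  unfolding ginv_def by (rule the_inv_into_f_f[OF f_inj]) auto

lemma f_g: "y \<ge> f 0 \<Longrightarrow> f (g y) = y"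
  unfolding ginv_def by (rule f_the_inv_into_f[OF f_inj f_onto])

lemma g_nonneg: "y \<ge> f 0 \<Longrightarrow> g y \<ge> 0"
  unfolding ginv_def using the_inv_into_into[OF f_inj f_onto, of y] by auto

lemma g_pos: "y > f 0 \<Longrightarrow> g y > 0"
  using g_nonneg[of y] f_g[of y] by (metis less_le less_imp_le)

lemma g_less: assumes "f 0 \<le> a" "a < b" shows "g a < g b"
proof (rule ccontr)
  assume "\<not> g a < g b" hence "g b \<le> g a" by simp
  hence "f (g b) \<le> f (g a)" using f_le_iff g_nonneg assms by simp
  thus False using f_g assms by simp
qed

lemma g_deriv: assumes "t > f 0" shows "(g has_real_derivative 1 / D 1 (g t)) (at t)"
proof -
  have gt: "g t > 0" using g_pos assms by auto
  have cont: "isCont g t"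
  proof -
    have "isCont g (f (g t))"
    proof (rule isCont_inverse_function[where f=f and g=g and x="g t" and d="g t / 2"])
      show "0 < g t / 2" using gt by simp
      fix z assume "\<bar>z - g t\<bar> \<le> g t / 2"
      hence z: "z > 0" using gt by linarith
      show "g (f z) = z" using g_f z by simp
      show "isCont f z" using f_isCont z by simp
    qed
    thus ?thesis using f_g assms by simp
  qed
  have "DERIV g t :> inverse (D 1 (g t))"
    by (rule DERIV_inverse_function[where a="f 0" and b="t+1"])
       (use f_at[OF gt] D1pos[of "g t"] gt assms f_g cont in \<open>auto\<close>)
  thus ?thesis by (simp add: divide_inverse)
qed

lemma gd1_eq: "t > f 0 \<Longrightarrow> gd f 1 t = 1 / D 1 (g t)"
  unfolding gd_def using DERIV_imp_deriv[OF g_deriv] by simp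

lemma gd1_pos: "t > f 0 \<Longrightarrow> gd f 1 t > 0"
  using gd1_eq g_pos D1pos by (simp add: less_imp_le)

lemma gd1_deriv_raw: assumes "t > f 0"
  shows "((\<lambda>s. 1 / D 1 (g s)) has_real_derivative - D 2 (g t) / D 1 (g t) ^ 3) (at t)"
proof -
  have gt: "g t > 0" using g_pos assms by auto
  have d: "((\<lambda>s. D 1 (g s)) has_real_derivative D 2 (g t) * (1 / D 1 (g t))) (at t)"
    using DERIV_chain2[OF D1_at[OF gt] g_deriv[OF assms]] .
  have "((\<lambda>s. inverse (D 1 (g s))) has_real_derivative - (D 2 (g t) * (1 / D 1 (g t)) * inverse (D 1 (g t) ^ Suc (Suc 0)))) (at t)"
    by (rule DERIV_inverse_fun[OF d]) (use D1pos[of "g t"] gt in simp)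
  hence "((\<lambda>s. 1 / D 1 (g s)) has_real_derivative - (D 2 (g t) * (1 / D 1 (g t)) * inverse (D 1 (g t) ^ Suc (Suc 0)))) (at t)"
    by (simp add: divide_inverse)
  moreover have "- (D 2 (g t) * (1 / D 1 (g t)) * inverse (D 1 (g t) ^ Suc (Suc 0))) = - D 2 (g t) / D 1 (g t) ^ 3"
    using D1pos[of "g t"] gt by (simp add: power3_eq_cube field_simps)
  ultimately show ?thesis by simp
qed

lemma gd1_deriv: assumes "t > f 0"
  shows "(gd f 1 has_real_derivative - D 2 (g t) / D 1 (g t) ^ 3) (at t)"
  by (rule has_field_derivative_transform_within_open[OF gd1_deriv_raw[OF assms], where S="{f 0<..}"])
     (use assms gd1_eq in auto)

lemma gd2_eq: assumes "t > f 0" shows "gd f 2 t = - D 2 (g t) / D 1 (g t) ^ 3"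
proof -
  have "gd f 2 t = deriv (gd f 1) t" by (simp add: gd_def numeral_2_eq_2)
  thus ?thesis using gd1_deriv[OF assms] DERIV_imp_deriv by simp
qed

lemma gd1_has_gd2: "t > f 0 \<Longrightarrow> (gd f 1 has_real_derivative gd f 2 t) (at t)"
  using gd1_deriv gd2_eq by simp

lemma g_has_gd1: "t > f 0 \<Longrightarrow> (g has_real_derivative gd f 1 t) (at t)"
  using g_deriv gd1_eq by simp

end


lemma sublinear:
  fixes \<phi> \<phi>' :: "real \<Rightarrow> real"
  assumes der: "\<And>t. t \<ge> Tb \<Longrightarrow> (\<phi> has_real_derivative \<phi>' t) (at t)"
    and lim: "(\<phi>' \<longlongrightarrow> 0) at_top"
  shows "((\<lambda>t. \<phi> t / t) \<longlongrightarrow> 0) at_top"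
proof (rule tendstoI)
  fix e :: real assume e: "e > 0"
  have "eventually (\<lambda>t. dist (\<phi>' t) 0 < e/2) at_top" using tendstoD[OF lim, of "e/2"] e by simp
  then obtain T1' where T1': "\<And>t. t \<ge> T1' \<Longrightarrow> \<bar>\<phi>' t\<bar> < e/2" by (auto simp: eventually_at_top_linorder)
  define T1 where "T1 = max (max T1' Tb) 1"
  have T1: "T1 \<ge> T1'" "T1 \<ge> Tb" "T1 \<ge> 1" by (auto simp: T1_def)
  define T2 where "T2 = max T1 (2 * \<bar>\<phi> T1\<bar> / e) + 1"
  have "\<forall>t\<ge>T2. dist (\<phi> t / t) 0 < e"
  proof (intro allI impI)
    fix t assume t: "t \<ge> T2"
    have tT1: "t > T1" using t by (simp add: T2_def)
    have tpos: "t > 0" using tT1 T1 by linarith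
    have dd: "\<And>s. T1 \<le> s \<Longrightarrow> s \<le> t \<Longrightarrow> (\<phi> has_real_derivative \<phi>' s) (at s)"
    proof -
      fix s assume "T1 \<le> s" "s \<le> t"
      hence "s \<ge> Tb" using T1 by linarith
      thus "(\<phi> has_real_derivative \<phi>' s) (at s)" by (rule der)
    qed
    obtain z where z: "T1 < z" "z < t" "\<phi> t - \<phi> T1 = (t - T1) * \<phi>' z"
      using MVT2[OF tT1 dd] by blast
    have "\<bar>\<phi>' z\<bar> < e/2" using T1' z T1 by simp
    hence "\<bar>\<phi> t - \<phi> T1\<bar> \<le> (t - T1) * (e/2)"
      using z tT1 by (simp add: abs_mult mult_left_mono)
    also have "\<dots> \<le> t * (e/2)" using T1 e by (simp add: mult_right_mono)
    finally have a: "\<bar>\<phi> t\<bar> \<le> \<bar>\<phi> T1\<bar> + t * (e/2)" by linarith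
    have "2 * \<bar>\<phi> T1\<bar> / e < t" using t by (simp add: T2_def)
    hence b: "\<bar>\<phi> T1\<bar> < t * (e/2)" using e by (simp add: field_simps)
    have "\<bar>\<phi> t\<bar> < t * e" using a b by linarith
    thus "dist (\<phi> t / t) 0 < e" using tpos by (simp add: abs_div field_simps)
  qed
  thus "eventually (\<lambda>t. dist (\<phi> t / t) 0 < e) at_top" by (auto simp: eventually_at_top_linorder)
qed

lemma lip_bound:
  fixes \<phi> \<phi>' :: "real \<Rightarrow> real"
  assumes der: "\<And>t. t \<ge> Tb \<Longrightarrow> (\<phi> has_real_derivative \<phi>' t) (at t)"
    and bd: "\<And>t. t \<ge> Tb \<Longrightarrow> \<bar>\<phi>' t\<bar> \<le> 1"
    and ab: "a \<ge> Tb" "b \<ge> Tb"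
  shows "\<bar>\<phi> b - \<phi> a\<bar> \<le> \<bar>b - a\<bar>"
proof -
  have main: "\<bar>\<phi> y - \<phi> x\<bar> \<le> y - x" if "Tb \<le> x" "x < y" for x y
  proof -
    have dd: "\<And>s. x \<le> s \<Longrightarrow> s \<le> y \<Longrightarrow> (\<phi> has_real_derivative \<phi>' s) (at s)"
    proof -
      fix s assume "x \<le> s" "s \<le> y"
      hence "s \<ge> Tb" using that by linarith
      thus "(\<phi> has_real_derivative \<phi>' s) (at s)" by (rule der)
    qed
    obtain z where z: "x < z" "z < y" "\<phi> y - \<phi> x = (y - x) * \<phi>' z"
      using MVT2[OF \<open>x < y\<close> dd] by blast
    have "\<bar>\<phi>' z\<bar> \<le> 1" using bd z that by simp
    hence "\<bar>(y - x) * \<phi>' z\<bar> \<le> (y - x) * 1"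
    proof -
      have "\<bar>y - x\<bar> = y - x" using that by simp
      thus ?thesis unfolding abs_mult using \<open>\<bar>\<phi>' z\<bar> \<le> 1\<close> that by (simp add: mult_left_mono)
    qed
    thus ?thesis using z(3) by simp
  qed
  show ?thesis
  proof (cases a b rule: linorder_cases)
    case less thus ?thesis using main[of a b] ab by simp
  next
    case equal thus ?thesis by simp
  next
    case greater thus ?thesis using main[of b a] ab by (simp add: abs_minus_commute)
  qed
qed

context fctx begin

lemma lng1_deriv: "t > f 0 \<Longrightarrow> ((\<lambda>s. ln (gd f 1 s)) has_real_derivative gd f 2 t / gd f 1 t) (at t)"
  using DERIV_chain2[OF DERIV_ln_divide[OF gd1_pos] gd1_has_gd2] by simp

end

locale mctx = fctx +
  assumes A2a: "(gd f 2 \<longlongrightarrow> 0) at_top"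
    and A4: "((\<lambda>t. gd f 2 t / gd f 1 t * ln (gd f 1 t)) \<longlongrightarrow> 0) at_top"
begin

lemma ratio0: "((\<lambda>t. gd f 2 t / gd f 1 t) \<longlongrightarrow> 0) at_top"
proof (rule tendstoI)
  fix e :: real assume e: "e > 0"
  have ev1: "eventually (\<lambda>t. \<bar>gd f 2 t / gd f 1 t * ln (gd f 1 t)\<bar> < e) at_top"
    using tendstoD[OF A4 e] by simp
  have ev2: "eventually (\<lambda>t. \<bar>gd f 2 t\<bar> < e/3) at_top"
    using tendstoD[OF A2a, of "e/3"] e by simp
  have ev3: "eventually (\<lambda>t. t > f 0) at_top" by (rule eventually_gt_at_top)
  show "eventually (\<lambda>t. dist (gd f 2 t / gd f 1 t) 0 < e) at_top"
    using ev1 ev2 ev3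
  proof eventually_elim
    case (elim t)
    have p: "gd f 1 t > 0" using gd1_pos elim(3) by simp
    show ?case
    proof (cases "\<bar>ln (gd f 1 t)\<bar> \<ge> 1")
      case True
      have "\<bar>gd f 2 t / gd f 1 t\<bar> \<le> \<bar>gd f 2 t / gd f 1 t\<bar> * \<bar>ln (gd f 1 t)\<bar>"
      proof -
        have "\<bar>gd f 2 t / gd f 1 t\<bar> * 1 \<le> \<bar>gd f 2 t / gd f 1 t\<bar> * \<bar>ln (gd f 1 t)\<bar>"
          by (rule mult_left_mono) (use True in auto)
        thus ?thesis by simp
      qed
      thus ?thesis using elim(1) by (simp add: abs_mult)
    next
      case False
      hence "ln (gd f 1 t) > -1" by simp
      hence "gd f 1 t > exp (-1)" using p by (metis exp_less_cancel_iff exp_ln)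
      moreover have "exp (-1::real) \<ge> 1/3" using exp_le by (simp add: exp_minus field_simps)
      ultimately have q: "gd f 1 t > 1/3" by simp
      have "\<bar>gd f 2 t / gd f 1 t\<bar> = \<bar>gd f 2 t\<bar> / gd f 1 t" using p by (simp add: abs_div)
      also have "\<dots> \<le> \<bar>gd f 2 t\<bar> * 3"
      proof -
        have "\<bar>gd f 2 t\<bar> * 1 \<le> \<bar>gd f 2 t\<bar> * (3 * gd f 1 t)"
          by (rule mult_left_mono) (use q in auto)
        thus ?thesis using p by (simp add: field_simps)
      qed
      also have "\<dots> < e" using elim(2) by simp
      finally show ?thesis by simp
    qed
  qed
qed

lemma loglip: "\<exists>T0>f 0. \<forall>a b. a \<ge> T0 \<longrightarrow> b \<ge> T0 \<longrightarrow>
   \<bar>ln (gd f 1 b) - ln (gd f 1 a)\<bar> \<le> \<bar>b - a\<bar>"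
proof -
  have "eventually (\<lambda>t. \<bar>gd f 2 t / gd f 1 t\<bar> < 1) at_top" using tendstoD[OF ratio0, of 1] by simp
  then obtain T where T: "\<And>t. t \<ge> T \<Longrightarrow> \<bar>gd f 2 t / gd f 1 t\<bar> < 1" by (auto simp: eventually_at_top_linorder)
  define T0 where "T0 = max T (f 0 + 1)"
  have "\<forall>a b. a \<ge> T0 \<longrightarrow> b \<ge> T0 \<longrightarrow> \<bar>ln (gd f 1 b) - ln (gd f 1 a)\<bar> \<le> \<bar>b - a\<bar>"
  proof (intro allI impI)
    fix a b assume ab: "a \<ge> T0" "b \<ge> T0"
    show "\<bar>ln (gd f 1 b) - ln (gd f 1 a)\<bar> \<le> \<bar>b - a\<bar>"
      by (rule lip_bound[where Tb=T0 and \<phi>'="\<lambda>t. gd f 2 t / gd f 1 t"])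
         (use ab lng1_deriv T in \<open>auto simp: T0_def less_imp_le\<close>)
  qed
  moreover have "T0 > f 0" by (simp add: T0_def)
  ultimately show ?thesis by blast
qed

lemma lng1_sublin: "((\<lambda>t. ln (gd f 1 t) / t) \<longlongrightarrow> 0) at_top"
  by (rule sublinear[where Tb="f 0 + 1", OF lng1_deriv ratio0]) simp

end


lemma dist0_less: "dist (q::real) 0 < c \<Longrightarrow> q < c"
  by (simp add: dist_real_def)

lemma half_sub: "(c::real) \<noteq> 0 \<Longrightarrow> t / c - t / (2 * c) = t / (2 * c)"
  by (simp add: field_simps)

lemma aux3: "(a::real) < c \<Longrightarrow> b - c = c \<Longrightarrow> a - b \<le> - c"
  by linarith

locale bctx = mctx +
  fixes \<beta> :: real
  assumes bpos: "\<beta> \<ge> 0"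
begin

definition ee :: "real \<Rightarrow> real" where "ee x = exp (- f x / (\<beta> + 1))"
definition GG :: "real \<Rightarrow> real" where "GG x = (\<beta> + 1) * ee x / D 1 x"
definition ww :: "real \<Rightarrow> real" where "ww x = (\<beta> + 1) * D 2 x / D 1 x ^ 2"
definition kk :: "real \<Rightarrow> real" where "kk x = ee x * (1 + ww x)"

lemma b1: "\<beta> + 1 > 0" using bpos by simp

lemma ee_pos: "ee x > 0" by (simp add: ee_def)

lemma ee_deriv: "x > 0 \<Longrightarrow> (ee has_real_derivative ee x * (- D 1 x / (\<beta> + 1))) (at x)"
proof -
  assume x: "x > 0"
  have h1: "((\<lambda>x. - f x / (\<beta> + 1)) has_real_derivative - D 1 x / (\<beta> + 1)) (at x)"
    using DERIV_cdivide[OF DERIV_minus[OF f_at[OF x]]] .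
  show ?thesis unfolding ee_def[abs_def] using DERIV_chain2[OF DERIV_exp h1] .
qed

lemma GG_deriv: assumes x: "x > 0" shows "((\<lambda>x. - GG x) has_real_derivative kk x) (at x)"
proof -
  have d1: "D 1 x > 0" using D1pos x by simp
  have h: "((\<lambda>x. (\<beta> + 1) * ee x / D 1 x) has_real_derivative
      ((\<beta> + 1) * (ee x * (- D 1 x / (\<beta> + 1))) * D 1 x - (\<beta> + 1) * ee x * D 2 x) / (D 1 x * D 1 x)) (at x)"
    by (rule DERIV_divide[OF DERIV_cmult[OF ee_deriv[OF x]] D1_at[OF x]]) (use d1 in simp)
  have eq: "- (((\<beta> + 1) * (ee x * (- D 1 x / (\<beta> + 1))) * D 1 x - (\<beta> + 1) * ee x * D 2 x) / (D 1 x * D 1 x)) = kk x"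
  proof -
    have a: "(\<beta> + 1) * (ee x * (- D 1 x / (\<beta> + 1))) = - (ee x * D 1 x)" using b1 by (simp add: field_simps)
    have "- ((- (ee x * D 1 x) * D 1 x - (\<beta> + 1) * ee x * D 2 x) / (D 1 x * D 1 x))
        = ee x * (1 + (\<beta> + 1) * D 2 x / D 1 x ^ 2)"
      using d1 by (simp add: field_simps power2_eq_square)
    thus ?thesis unfolding a kk_def ww_def .
  qed
  show ?thesis using DERIV_minus[OF h] unfolding GG_def[abs_def] eq .
qed

lemma GG_isCont: "x > 0 \<Longrightarrow> isCont GG x"
  using GG_deriv[of x] DERIV_isCont continuous_minus by fastforce

lemma kk_isCont: assumes x: "x > 0" shows "isCont kk x"
proof -
  have "D 1 x > 0" using D1pos[of x] x by simp
  hence d1: "D 1 x \<noteq> 0" by simp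
  have "isCont (\<lambda>x. exp (- f x / (\<beta> + 1)) * (1 + (\<beta> + 1) * D 2 x / D 1 x ^ 2)) x"
    by (intro continuous_intros f_isCont[OF x] D1_isCont[OF x] D2_isCont[OF x]) (use d1 b1 in auto)
  thus ?thesis by (simp add: kk_def[abs_def] ww_def ee_def)
qed

lemma ww_lim: "(ww \<longlongrightarrow> 0) at_top"
proof -
  have ev: "eventually (\<lambda>x. ww x = - (\<beta> + 1) * (gd f 2 (f x) / gd f 1 (f x))) at_top"
    using eventually_gt_at_top[of 0]
  proof eventually_elim
    case (elim x)
    have fx: "f x > f 0" using f_less elim by simp
    have gfx: "g (f x) = x" using g_f elim by simp
    have d1: "D 1 x > 0" using D1pos elim by simp
    have e1: "gd f 1 (f x) = 1 / D 1 x" using gd1_eq[OF fx] gfx by simp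
    have e2: "gd f 2 (f x) = - D 2 x / D 1 x ^ 3" using gd2_eq[OF fx] gfx by simp
    show ?case unfolding e1 e2 ww_def using d1
      by (simp add: field_simps power2_eq_square power3_eq_cube)
  qed
  have "((\<lambda>x. - (\<beta> + 1) * (gd f 2 (f x) / gd f 1 (f x))) \<longlongrightarrow> - (\<beta> + 1) * 0) at_top"
    by (intro tendsto_mult tendsto_const filterlim_compose[OF ratio0 flim])
  thus ?thesis using tendsto_cong[OF ev] by simp
qed

lemma GG_lim: "(GG \<longlongrightarrow> 0) at_top"
proof -
  have ev: "eventually (\<lambda>x. GG x = (\<beta> + 1) * exp (ln (gd f 1 (f x)) - f x / (\<beta> + 1))) at_top"
    using eventually_gt_at_top[of 0]
  proof eventually_elim
    case (elim x)
    have fx: "f x > f 0" using f_less elim by simp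
    have gfx: "g (f x) = x" using g_f elim by simp
    have d1: "D 1 x > 0" using D1pos elim by simp
    have "exp (ln (gd f 1 (f x)) - f x / (\<beta> + 1)) = gd f 1 (f x) * ee x"
      using gd1_pos[OF fx] by (simp add: exp_diff ee_def exp_minus field_simps)
    thus ?case using gd1_eq[OF fx] gfx d1 by (simp add: GG_def)
  qed
  have ev2: "eventually (\<lambda>t. ln (gd f 1 t) / t < 1 / (2 * (\<beta> + 1))) at_top"
  proof -
    have c: "1 / (2 * (\<beta> + 1)) > 0" using b1 by simp
    show ?thesis by (rule eventually_mono[OF tendstoD[OF lng1_sublin c]]) (rule dist0_less)
  qed
  have ev3: "eventually (\<lambda>t. ln (gd f 1 t) - t / (\<beta> + 1) \<le> - (t / (2 * (\<beta> + 1)))) at_top"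
    using ev2 eventually_gt_at_top[of 0]
  proof eventually_elim
    case (elim t)
    hence "ln (gd f 1 t) < t / (2 * (\<beta> + 1))" using b1 by (simp add: field_simps)
    moreover have "t / (\<beta> + 1) - t / (2 * (\<beta> + 1)) = t / (2 * (\<beta> + 1))" using b1 half_sub[of "\<beta>+1" t] by simp
    ultimately show ?case by (rule aux3)
  qed
  have lim1: "filterlim (\<lambda>t. - (t / (2 * (\<beta> + 1)))) at_bot at_top"
  proof -
    have c: "1 / (2 * (\<beta> + 1)) > 0" using b1 by simp
    have "LIM t at_top. (1 / (2 * (\<beta> + 1))) * t :> at_top"
      by (rule filterlim_tendsto_pos_mult_at_top[OF tendsto_const c filterlim_ident])
    hence "LIM t at_top. t / (2 * (\<beta> + 1)) :> at_top" by simp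
    thus ?thesis by (rule filterlim_uminus_at_top[THEN iffD1])
  qed
  have "filterlim (\<lambda>t. ln (gd f 1 t) - t / (\<beta> + 1)) at_bot at_top"
    by (rule filterlim_at_bot_mono[OF lim1 ev3])
  hence "filterlim (\<lambda>x. ln (gd f 1 (f x)) - f x / (\<beta> + 1)) at_bot at_top"
    using filterlim_compose flim by blast
  hence "((\<lambda>x. exp (ln (gd f 1 (f x)) - f x / (\<beta> + 1))) \<longlongrightarrow> 0) at_top"
    using exp_at_bot filterlim_compose by blast
  hence "((\<lambda>x. (\<beta> + 1) * exp (ln (gd f 1 (f x)) - f x / (\<beta> + 1))) \<longlongrightarrow> (\<beta> + 1) * 0) at_top"
    by (intro tendsto_mult tendsto_const)
  thus ?thesis using tendsto_cong[OF ev] by simp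
qed

end


context bctx begin

lemma ww_small: assumes "\<eta> > 0" shows "\<exists>X>0. \<forall>x\<ge>X. \<bar>ww x\<bar> \<le> \<eta>"
proof -
  have "eventually (\<lambda>x. dist (ww x) 0 < \<eta>) at_top" using tendstoD[OF ww_lim assms] .
  then obtain X where X: "\<And>x. x \<ge> X \<Longrightarrow> dist (ww x) 0 < \<eta>" by (auto simp: eventually_at_top_linorder)
  show ?thesis
  proof (intro exI[of _ "max X 1"] conjI allI impI)
    fix x assume "x \<ge> max X 1"
    hence "dist (ww x) 0 < \<eta>" using X by simp
    thus "\<bar>ww x\<bar> \<le> \<eta>" by (simp add: dist_real_def)
  qed simp
qed

lemma kk_int: assumes a: "a > 0" and w: "\<And>x. x > a \<Longrightarrow> \<bar>ww x\<bar> \<le> 1"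
  shows "set_integrable lborel {a<..} kk" "(LINT x:{a<..}|lborel. kk x) = GG a"
proof -
  have F: "\<And>x. ereal a < ereal x \<Longrightarrow> ereal x < \<infinity> \<Longrightarrow> ((\<lambda>x. - GG x) has_real_derivative kk x) (at x)"
    using GG_deriv a by simp
  have C: "\<And>x. ereal a < ereal x \<Longrightarrow> ereal x < \<infinity> \<Longrightarrow> isCont kk x"
    using kk_isCont a by simp
  have N: "AE x in lborel. ereal a < ereal x \<longrightarrow> ereal x < \<infinity> \<longrightarrow> 0 \<le> kk x"
  proof (rule AE_I2, intro impI)
    fix x assume "ereal a < ereal x"
    hence "x > a" by simp
    hence "1 + ww x \<ge> 0" using w[of x] by linarith
    thus "0 \<le> kk x" unfolding kk_def using ee_pos[of x] by simp
  qed
  have A: "(((\<lambda>x. - GG x) \<circ> real_of_ereal) \<longlongrightarrow> - GG a) (at_right (ereal a))"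
  proof -
    have "(GG \<longlongrightarrow> GG a) (at a)" using GG_isCont[OF a] by (simp add: isCont_def)
    hence "(GG \<longlongrightarrow> GG a) (at_right a)" by (rule tendsto_mono[rotated]) (simp add: at_le)
    hence "((\<lambda>x. - GG x) \<longlongrightarrow> - GG a) (at_right a)" by (rule tendsto_minus)
    thus ?thesis by (simp add: ereal_tendsto_simps1)
  qed
  have B: "(((\<lambda>x. - GG x) \<circ> real_of_ereal) \<longlongrightarrow> 0) (at_left \<infinity>)"
  proof -
    have "((\<lambda>x. - GG x) \<longlongrightarrow> - 0) at_top" by (rule tendsto_minus[OF GG_lim])
    thus ?thesis by (simp add: ereal_tendsto_simps1)
  qed
  have lt: "ereal a < \<infinity>" by simp
  note R = interval_integral_FTC_nonneg[OF lt F C N A B]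
  show "set_integrable lborel {a<..} kk" using R(1) by simp
  show "(LINT x:{a<..}|lborel. kk x) = GG a" using R(2) by (simp add: interval_lebesgue_integral_def)
qed

lemma ee_cont: "continuous_on {0..} ee"
proof -
  have "continuous_on {0..} (\<lambda>x. exp (- f x / (\<beta> + 1)))"
    by (intro continuous_intros f_cont) (use b1 in simp)
  thus ?thesis by (simp add: ee_def[abs_def])
qed

lemma ee_meas: "A \<subseteq> {0..} \<Longrightarrow> A \<in> sets borel \<Longrightarrow> set_borel_measurable lborel A ee"
proof -
  assume "A \<subseteq> {0..}" "A \<in> sets borel"
  moreover have "continuous_on A ee" using ee_cont continuous_on_subset calculation(1) by blast
  ultimately have "set_borel_measurable borel A ee" by (intro set_measurable_continuous_on) auto
  thus ?thesis by (simp add: set_borel_measurable_def)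
qed

lemma ee_int_tail: assumes X: "X > 0" and w: "\<And>x. x > X \<Longrightarrow> \<bar>ww x\<bar> \<le> 1/2"
  shows "set_integrable lborel {X<..} ee"
proof -
  have ki: "set_integrable lborel {X<..} kk" using kk_int(1)[OF X] w by force
  have ki2: "set_integrable lborel {X<..} (\<lambda>x. 2 * kk x)" using ki by simp
  show ?thesis
  proof (rule set_integrable_bound[OF ki2 ee_meas])
    show "{X<..} \<subseteq> {0..}" using X by auto
    show "{X<..} \<in> sets borel" by simp
    show "AE x in lborel. x \<in> {X<..} \<longrightarrow> norm (ee x) \<le> norm (2 * kk x)"
    proof (rule AE_I2, intro impI)
      fix x assume "x \<in> {X<..}"
      hence "\<bar>ww x\<bar> \<le> 1/2" using w by simp
      hence "1/2 \<le> 1 + ww x" by linarith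
      hence "ee x * (1/2) \<le> ee x * (1 + ww x)" using ee_pos[of x] by (intro mult_left_mono) auto
      hence "ee x \<le> 2 * kk x" unfolding kk_def by simp
      thus "norm (ee x) \<le> norm (2 * kk x)" using ee_pos[of x] by simp
    qed
  qed
qed

lemma ee_int: "set_integrable lborel {0..} ee"
proof -
  obtain X where X: "X > 0" "\<And>x. x \<ge> X \<Longrightarrow> \<bar>ww x\<bar> \<le> 1/2" using ww_small[of "1/2"] by auto
  have t: "set_integrable lborel {X<..} ee" by (rule ee_int_tail) (use X in auto)
  have h: "set_integrable lborel {0..X} ee"
    by (rule borel_integrable_atLeastAtMost') (rule continuous_on_subset[OF ee_cont], auto)
  have "set_integrable lborel ({0..X} \<union> {X<..}) ee" by (rule set_integrable_Un[OF h t]) auto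
  moreover have "{0..X} \<union> {X<..} = {0..}" using X by auto
  ultimately show ?thesis by simp
qed

lemma ee_int_sub: "A \<subseteq> {0..} \<Longrightarrow> A \<in> sets borel \<Longrightarrow> set_integrable lborel A ee"
  by (rule set_integrable_subset[OF ee_int]) auto

definition Fc :: "real \<Rightarrow> real" where "Fc x = (LINT s:{x..}|lborel. ee s)"

lemma Fc_less: assumes "0 \<le> a" "a < b" shows "Fc b < Fc a"
proof -
  have i1: "set_integrable lborel {a..<b} ee" by (rule ee_int_sub) (use assms in auto)
  have i2: "set_integrable lborel {b..} ee" by (rule ee_int_sub) (use assms in auto)
  have "Fc a = (LINT s:{a..<b} \<union> {b..}|lborel. ee s)"
    unfolding Fc_def using assms by (intro arg_cong[where f="\<lambda>A. LINT s:A|lborel. ee s"]) auto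
  also have "\<dots> = (LINT s:{a..<b}|lborel. ee s) + Fc b"
    unfolding Fc_def by (rule set_integral_Un[OF _ i1 i2]) auto
  finally have eq: "Fc a = (LINT s:{a..<b}|lborel. ee s) + Fc b" .
  have ci: "set_integrable lborel {a..<b} (\<lambda>s. ee b)"
    by (rule set_integrable_subset[OF borel_integrable_atLeastAtMost'[of a b]]) auto
  have "(LINT s:{a..<b}|lborel. ee b) \<le> (LINT s:{a..<b}|lborel. ee s)"
  proof (rule set_integral_mono[OF ci i1])
    fix s assume s: "s \<in> {a..<b}"
    hence "f s \<le> f b" using f_le_iff[of s b] assms by auto
    hence "- f b / (\<beta> + 1) \<le> - f s / (\<beta> + 1)" using b1 by (simp add: divide_right_mono)
    thus "ee b \<le> ee s" by (simp add: ee_def)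
  qed
  moreover have "(LINT s:{a..<b}|lborel. ee b) = (b - a) * ee b"
    using assms by (simp add: set_integral_const)
  moreover have "(b - a) * ee b > 0" using assms ee_pos by simp
  ultimately show ?thesis using eq by linarith
qed

lemma Fc_inj: "inj_on Fc {0..}"
proof (rule inj_onI)
  fix x y assume "x \<in> {0..}" "y \<in> {0..}" "Fc x = Fc y"
  thus "x = y" using Fc_less[of x y] Fc_less[of y x] by (cases x y rule: linorder_cases) auto
qed

lemma GG_pos: "x > 0 \<Longrightarrow> GG x > 0"
  using ee_pos[of x] D1pos[of x] b1 by (simp add: GG_def)

lemma GF_bounds: assumes x: "x > 0" and "0 < \<eta>" "\<eta> \<le> 1/2" and w: "\<And>s. s > x \<Longrightarrow> \<bar>ww s\<bar> \<le> \<eta>"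
  shows "\<bar>GG x / Fc x - 1\<bar> \<le> 2 * \<eta>"
proof -
  have w1: "\<And>s. s > x \<Longrightarrow> \<bar>ww s\<bar> \<le> 1" using w assms by force
  have ki: "set_integrable lborel {x<..} kk" and kv: "(LINT s:{x<..}|lborel. kk s) = GG x"
    using kk_int[OF x w1] by auto
  have ei: "set_integrable lborel {x<..} ee" by (rule ee_int_sub) (use x in auto)
  have FI: "Fc x = (LINT s:{x<..}|lborel. ee s)"
    unfolding Fc_def
  proof (rule set_integral_cong_set)
    show "set_borel_measurable lborel {x<..} ee" by (rule ee_meas) (use x in auto)
    show "set_borel_measurable lborel {x..} ee" by (rule ee_meas) (use x in auto)
    show "AE s in lborel. (s \<in> {x<..}) = (s \<in> {x..})"
      by (rule AE_mp[OF AE_lborel_singleton[of x]]) auto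
  qed
  have lo: "(LINT s:{x<..}|lborel. (1 - \<eta>) * ee s) \<le> (LINT s:{x<..}|lborel. kk s)"
  proof (rule set_integral_mono)
    show "set_integrable lborel {x<..} (\<lambda>s. (1 - \<eta>) * ee s)" using ei by simp
    show "set_integrable lborel {x<..} kk" by (rule ki)
    fix s assume "s \<in> {x<..}"
    hence "\<bar>ww s\<bar> \<le> \<eta>" using w by simp
    hence "1 - \<eta> \<le> 1 + ww s" by linarith
    thus "(1 - \<eta>) * ee s \<le> kk s" unfolding kk_def using ee_pos[of s] by (simp add: mult.commute)
  qed
  have hi: "(LINT s:{x<..}|lborel. kk s) \<le> (LINT s:{x<..}|lborel. (1 + \<eta>) * ee s)"
  proof (rule set_integral_mono)
    show "set_integrable lborel {x<..} (\<lambda>s. (1 + \<eta>) * ee s)" using ei by simp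
    show "set_integrable lborel {x<..} kk" by (rule ki)
    fix s assume "s \<in> {x<..}"
    hence "\<bar>ww s\<bar> \<le> \<eta>" using w by simp
    hence "1 + ww s \<le> 1 + \<eta>" by linarith
    thus "kk s \<le> (1 + \<eta>) * ee s" unfolding kk_def using ee_pos[of s] by (simp add: mult.commute)
  qed
  define I where "I = Fc x"
  have lo': "(1 - \<eta>) * I \<le> GG x" using lo kv FI by (simp add: I_def)
  have hi': "GG x \<le> (1 + \<eta>) * I" using hi kv FI by (simp add: I_def)
  have Ipos: "I > 0"
  proof -
    have "0 < GG x" using GG_pos x by simp
    hence "0 < (1 + \<eta>) * I" using hi' by linarith
    thus ?thesis using assms by (simp add: zero_less_mult_iff)
  qed
  have "GG x / I - 1 \<le> \<eta>" using hi' Ipos by (simp add: field_simps)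
  moreover have "- \<eta> \<le> GG x / I - 1" using lo' Ipos by (simp add: field_simps)
  ultimately show ?thesis using assms by (simp add: I_def abs_le_iff)
qed

lemma GF_lim: "((\<lambda>x. GG x / Fc x) \<longlongrightarrow> 1) at_top"
proof (rule tendstoI)
  fix e :: real assume e: "e > 0"
  define \<eta> where "\<eta> = min (e / 4) (1/2)"
  have eta: "\<eta> > 0" "\<eta> \<le> 1/2" "2 * \<eta> < e" using e by (auto simp: \<eta>_def)
  obtain X where X: "X > 0" "\<And>x. x \<ge> X \<Longrightarrow> \<bar>ww x\<bar> \<le> \<eta>" using ww_small[OF eta(1)] by auto
  have "\<forall>x\<ge>X. dist (GG x / Fc x) 1 < e"
  proof (intro allI impI)
    fix x assume x: "x \<ge> X"
    have "\<bar>GG x / Fc x - 1\<bar> \<le> 2 * \<eta>" by (rule GF_bounds) (use x X eta in auto)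
    thus "dist (GG x / Fc x) 1 < e" using eta by (simp add: dist_real_def)
  qed
  thus "eventually (\<lambda>x. dist (GG x / Fc x) 1 < e) at_top" by (auto simp: eventually_at_top_linorder)
qed

lemma FG_lim: "((\<lambda>x. Fc x / GG x) \<longlongrightarrow> 1) at_top"
proof -
  have "((\<lambda>x. inverse (GG x / Fc x)) \<longlongrightarrow> inverse 1) at_top"
    by (rule tendsto_inverse[OF GF_lim]) simp
  thus ?thesis by simp
qed

end


lemma exp_m1_ge: "exp (-1::real) \<ge> 1/3"
  using exp_le by (simp add: exp_minus field_simps)

lemma kid_aux: "(c::real) \<noteq> 0 \<Longrightarrow> - L + - M / c + (N - t) / c = - (t + (c * L + M - N)) / c"
  by (simp add: field_simps)

locale tctx = bctx +
  fixes \<alpha> \<gamma> lam :: real and u :: "real \<Rightarrow> real"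
  assumes thpos: "theta \<alpha> \<beta> \<gamma> > 0" and abg: "\<alpha> > \<beta> + 1" and lampos: "lam > 0"
    and A3: "\<And>h. h \<in> o[at_top](\<lambda>t. t) \<Longrightarrow> ((\<lambda>t. gd f 1 t / gd f 1 (t + h t)) \<longlongrightarrow> 1) at_top"
    and A5: "\<And>h. h \<in> o[at_top](\<lambda>t. t) \<Longrightarrow> (\<lambda>t. gd f 2 (t + h t)) \<in> O[at_top](gd f 2)"
    and uinf: "filterlim u at_top (at_right 0)"
    and uasym: "(\<lambda>r. u r - ginv f (Zfun f \<alpha> \<beta> \<gamma> lam r))
       \<in> O[at_right 0](\<lambda>r. gd f 2 (ln (r powr (- theta \<alpha> \<beta> \<gamma>))))"
begin

abbreviation "\<theta> \<equiv> theta \<alpha> \<beta> \<gamma>"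
definition "PP = \<theta> powr (\<beta> + 1) * (\<alpha> - \<beta> - 1)"
definition "AA = ln PP - ln (\<beta> + 1)"
definition "LL t = ln (gd f 1 t + (\<beta> + 1) * gd f 2 t * ln (gd f 1 t))"
definition "rho t = exp ((ln (\<beta> + 1) - ln lam - t) / \<theta>)"
definition "rr t = exp ((ln (\<beta> + 1) - t) / \<theta>)"
definition "KK = (\<beta> + 1) / \<theta> * (\<alpha> - \<beta> - 1) powr (- 1 / (\<beta> + 1))"
definition "xt t = u (rho t)"
definition "Zt t = Zfun f \<alpha> \<beta> \<gamma> lam (rho t)"

lemma PP_pos: "PP > 0" using thpos abg by (simp add: PP_def)

lemma lnPP: "ln PP = (\<beta> + 1) * ln \<theta> + ln (\<alpha> - \<beta> - 1)"
  using thpos abg by (simp add: PP_def ln_mult ln_powr)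

lemma rho_pos: "rho t > 0" by (simp add: rho_def)

lemma ln_rho: "ln (rho t) = (ln (\<beta> + 1) - ln lam - t) / \<theta>" by (simp add: rho_def)

lemma Z_eq: "Zt t = AA + t + (\<beta> + 1) * LL t"
proof -
  have th: "\<theta> \<noteq> 0" using thpos by simp
  have "rho t powr \<theta> = exp (ln (\<beta> + 1) - ln lam - t)"
  proof -
    have "rho t \<noteq> 0" using rho_pos[of t] by simp
    thus ?thesis using th by (simp add: powr_def ln_rho)
  qed
  also have "\<dots> = (\<beta> + 1) / lam * exp (- t)"
    using b1 lampos by (simp add: exp_diff exp_add exp_minus field_simps)
  finally have "lam * rho t powr \<theta> = (\<beta> + 1) * exp (- t)" using lampos by simp
  moreover have "(\<beta> + 1) / ((\<beta> + 1) * exp (- t)) = exp t" using b1 by (simp add: exp_minus field_simps)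
  ultimately have tau: "ln ((\<beta> + 1) / (lam * rho t powr \<theta>)) = t" by simp
  have m: "- ln lam - \<theta> * ln (rho t) = t - ln (\<beta> + 1)" using th by (simp add: ln_rho field_simps)
  show ?thesis unfolding Zt_def Zfun_def Let_def tau
    using m by (simp add: AA_def PP_def LL_def algebra_simps)
qed

lemma ln_rho_powr: "ln (rho t powr (- \<theta>)) = t + (ln lam - ln (\<beta> + 1))"
proof -
  have th: "\<theta> \<noteq> 0" using thpos by simp
  have "ln (rho t powr (- \<theta>)) = - \<theta> * ln (rho t)" using rho_pos[of t] by (simp add: ln_powr)
  thus ?thesis using th by (simp add: ln_rho field_simps)
qed

lemma Kid: "KK * rr t powr (\<theta> / (\<beta> + 1)) = (\<beta> + 1) * exp (- (t + AA) / (\<beta> + 1))"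
proof -
  have th: "\<theta> > 0" using thpos by simp
  have ab: "\<alpha> - \<beta> - 1 > 0" using abg by simp
  have e1: "rr t powr (\<theta> / (\<beta> + 1)) = exp ((ln (\<beta> + 1) - t) / (\<beta> + 1))"
    using th b1 by (simp add: powr_def rr_def)
  have e2: "(\<alpha> - \<beta> - 1) powr (- 1 / (\<beta> + 1)) = exp (- ln (\<alpha> - \<beta> - 1) / (\<beta> + 1))"
    using ab by (simp add: powr_def)
  have e3: "1 / \<theta> = exp (- ln \<theta>)" using th by (simp add: exp_minus inverse_eq_divide)
  have "KK * rr t powr (\<theta> / (\<beta> + 1)) = (\<beta> + 1) * (exp (- ln \<theta>) * exp (- ln (\<alpha> - \<beta> - 1) / (\<beta> + 1)) * exp ((ln (\<beta> + 1) - t) / (\<beta> + 1)))"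
    unfolding KK_def e1 e2 using e3 by (simp add: divide_inverse mult.assoc mult.left_commute)
  also have "exp (- ln \<theta>) * exp (- ln (\<alpha> - \<beta> - 1) / (\<beta> + 1)) * exp ((ln (\<beta> + 1) - t) / (\<beta> + 1))
     = exp (- ln \<theta> + - ln (\<alpha> - \<beta> - 1) / (\<beta> + 1) + (ln (\<beta> + 1) - t) / (\<beta> + 1))"
    by (simp only: exp_add)
  also have "- ln \<theta> + - ln (\<alpha> - \<beta> - 1) / (\<beta> + 1) + (ln (\<beta> + 1) - t) / (\<beta> + 1) = - (t + AA) / (\<beta> + 1)"
    using b1 unfolding AA_def lnPP by (intro kid_aux) simp
  finally show ?thesis .
qed

lemma rho_lim: "filterlim rho (at_right 0) at_top"
proof -
  have th: "\<theta> > 0" using thpos by simp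
  have "LIM t at_top. (1/\<theta>) * t :> at_top"
    by (rule filterlim_tendsto_pos_mult_at_top[OF tendsto_const _ filterlim_ident]) (use th in simp)
  hence "LIM t at_top. - (ln (\<beta> + 1) - ln lam) / \<theta> + (1/\<theta>) * t :> at_top"
    by (rule filterlim_tendsto_add_at_top[OF tendsto_const])
  hence l1: "LIM t at_top. - (- (ln (\<beta> + 1) - ln lam) / \<theta> + (1/\<theta>) * t) :> at_bot"
    by (rule filterlim_uminus_at_top[THEN iffD1])
  have eq: "\<And>t. - (- (ln (\<beta> + 1) - ln lam) / \<theta> + (1/\<theta>) * t) = (ln (\<beta> + 1) - ln lam - t) / \<theta>"
    using th by (simp add: field_simps)
  have l2: "LIM t at_top. (ln (\<beta> + 1) - ln lam - t) / \<theta> :> at_bot" using l1 unfolding eq .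
  have "((\<lambda>t. exp ((ln (\<beta> + 1) - ln lam - t) / \<theta>)) \<longlongrightarrow> 0) at_top"
    using filterlim_compose[OF exp_at_bot l2] .
  moreover have "eventually (\<lambda>t. exp ((ln (\<beta> + 1) - ln lam - t) / \<theta>) > 0) at_top" by simp
  ultimately show ?thesis unfolding rho_def[abs_def] by (rule tendsto_imp_filterlim_at_right)
qed

lemma xt_lim: "filterlim xt at_top at_top"
  unfolding xt_def[abs_def] using filterlim_compose[OF uinf rho_lim] .

lemma err_bound: "\<exists>C>0. eventually (\<lambda>t. \<bar>xt t - g (Zt t)\<bar> \<le> C * \<bar>gd f 2 t\<bar>) at_top"
proof -
  obtain c where c: "c > 0" "eventually (\<lambda>r. norm (u r - g (Zfun f \<alpha> \<beta> \<gamma> lam r)) \<le> c * norm (gd f 2 (ln (r powr (- \<theta>))))) (at_right 0)"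
    using uasym by (elim landau_o.bigE)
  have e1: "eventually (\<lambda>t. \<bar>xt t - g (Zt t)\<bar> \<le> c * \<bar>gd f 2 (t + (ln lam - ln (\<beta> + 1)))\<bar>) at_top"
    by (rule eventually_mono[OF filterlim_iff[THEN iffD1, OF rho_lim, rule_format, OF c(2)]])
       (simp only: xt_def Zt_def ln_rho_powr real_norm_def)
  have ho: "(\<lambda>t. ln lam - ln (\<beta> + 1)) \<in> o[at_top](\<lambda>t. t)"
  proof (rule smalloI_tendsto)
    show "((\<lambda>t. (ln lam - ln (\<beta> + 1)) / t) \<longlongrightarrow> 0) at_top"
      by (rule tendsto_divide_0[OF tendsto_const filterlim_at_top_imp_at_infinity[OF filterlim_ident]])
    show "eventually (\<lambda>t. t \<noteq> (0::real)) at_top" using eventually_gt_at_top[of 0] by (rule eventually_mono) simp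
  qed
  obtain c2 where c2: "c2 > 0" "eventually (\<lambda>t. norm (gd f 2 (t + (ln lam - ln (\<beta> + 1)))) \<le> c2 * norm (gd f 2 t)) at_top"
    using A5[OF ho] by (elim landau_o.bigE)
  have "eventually (\<lambda>t. \<bar>xt t - g (Zt t)\<bar> \<le> (c * c2) * \<bar>gd f 2 t\<bar>) at_top"
    using e1 c2(2)
  proof eventually_elim
    case (elim t)
    have "c * \<bar>gd f 2 (t + (ln lam - ln (\<beta> + 1)))\<bar> \<le> c * (c2 * \<bar>gd f 2 t\<bar>)"
      using elim(2) c(1) by (intro mult_left_mono) auto
    thus ?case using elim(1) by (simp add: mult.assoc)
  qed
  thus ?thesis using c(1) c2(1) by (intro exI[of _ "c * c2"]) simp
qed

end


context tctx begin

definition "qq t = (\<beta> + 1) * (gd f 2 t / gd f 1 t * ln (gd f 1 t))"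

lemma qq_lim: "(qq \<longlongrightarrow> 0) at_top"
proof -
  have "((\<lambda>t. (\<beta> + 1) * (gd f 2 t / gd f 1 t * ln (gd f 1 t))) \<longlongrightarrow> (\<beta> + 1) * 0) at_top"
    by (rule tendsto_mult[OF tendsto_const A4])
  thus ?thesis by (simp add: qq_def[abs_def])
qed

lemma LL_eq: "eventually (\<lambda>t. 1 + qq t > 0 \<and> LL t = ln (gd f 1 t) + ln (1 + qq t)) at_top"
proof -
  have ev: "eventually (\<lambda>t. dist (qq t) 0 < 1/2) at_top" using tendstoD[OF qq_lim, of "1/2"] by simp
  show ?thesis using ev eventually_gt_at_top[of "f 0"]
  proof eventually_elim
    case (elim t)
    have p: "gd f 1 t > 0" using gd1_pos elim(2) by simp
    have q: "1 + qq t > 0" using elim(1) by (simp add: dist_real_def abs_less_iff)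
    have "gd f 1 t + (\<beta> + 1) * gd f 2 t * ln (gd f 1 t) = gd f 1 t * (1 + qq t)"
      using p by (simp add: qq_def field_simps)
    hence "LL t = ln (gd f 1 t * (1 + qq t))" by (simp add: LL_def)
    also have "\<dots> = ln (gd f 1 t) + ln (1 + qq t)" using p q by (simp add: ln_mult)
    finally show ?case using q by simp
  qed
qed

lemma h_small: "(\<lambda>t. Zt t - t) \<in> o[at_top](\<lambda>t. t)"
proof (rule smalloI_tendsto)
  show "eventually (\<lambda>t. t \<noteq> (0::real)) at_top" using eventually_gt_at_top[of 0] by (rule eventually_mono) simp
  have inf: "filterlim (\<lambda>t::real. t) at_infinity at_top" by (rule filterlim_at_top_imp_at_infinity[OF filterlim_ident])
  have l1: "((\<lambda>t. AA / t) \<longlongrightarrow> 0) at_top" by (rule tendsto_divide_0[OF tendsto_const inf])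
  have l2: "((\<lambda>t. ln (1 + qq t) / t) \<longlongrightarrow> 0) at_top"
  proof (rule tendsto_divide_0[OF _ inf])
    have "((\<lambda>t. ln (1 + qq t)) \<longlongrightarrow> ln (1 + 0)) at_top"
      by (rule tendsto_ln[OF tendsto_add[OF tendsto_const qq_lim]]) simp
    thus "((\<lambda>t. ln (1 + qq t)) \<longlongrightarrow> 0) at_top" by simp
  qed
  have "((\<lambda>t. AA / t + (\<beta> + 1) * (ln (gd f 1 t) / t) + (\<beta> + 1) * (ln (1 + qq t) / t)) \<longlongrightarrow> 0 + (\<beta> + 1) * 0 + (\<beta> + 1) * 0) at_top"
    by (intro tendsto_add tendsto_mult tendsto_const l1 l2 lng1_sublin)
  hence l: "((\<lambda>t. AA / t + (\<beta> + 1) * (ln (gd f 1 t) / t) + (\<beta> + 1) * (ln (1 + qq t) / t)) \<longlongrightarrow> 0) at_top" by simp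
  have ev: "eventually (\<lambda>t. AA / t + (\<beta> + 1) * (ln (gd f 1 t) / t) + (\<beta> + 1) * (ln (1 + qq t) / t) = (Zt t - t) / t) at_top"
    using LL_eq
  proof eventually_elim
    case (elim t)
    thus ?case by (simp add: Z_eq add_divide_distrib distrib_left)
  qed
  show "((\<lambda>t. (Zt t - t) / t) \<longlongrightarrow> 0) at_top" using tendsto_cong[OF ev] l by simp
qed

lemma P0: "((\<lambda>t. gd f 1 t / gd f 1 (Zt t)) \<longlongrightarrow> 1) at_top"
  using A3[OF h_small] by simp

lemma Zt_lim: "filterlim Zt at_top at_top"
proof -
  have "eventually (\<lambda>t. norm (Zt t - t) \<le> (1/2) * norm t) at_top"
    using landau_o.smallD[OF h_small, of "1/2"] by simp
  hence "eventually (\<lambda>t. \<bar>Zt t - t\<bar> \<le> (1/2) * \<bar>t\<bar>) at_top" by simp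
  hence ev: "eventually (\<lambda>t. t / 2 \<le> Zt t) at_top"
    using eventually_gt_at_top[of 0]
  proof eventually_elim
    case (elim t)
    have "- (Zt t - t) \<le> \<bar>Zt t - t\<bar>" by simp
    moreover have "\<bar>t\<bar> = t" using elim(2) by simp
    ultimately show ?case using elim(1) by linarith
  qed
  have "LIM t at_top. (1/2) * (t::real) :> at_top"
    by (rule filterlim_tendsto_pos_mult_at_top[OF tendsto_const _ filterlim_ident]) simp
  hence "LIM t at_top. (t::real) / 2 :> at_top" by simp
  thus ?thesis by (rule filterlim_at_top_mono[OF _ ev])
qed

definition "TT = (SOME T. T > f 0 \<and> (\<forall>a b. a \<ge> T \<longrightarrow> b \<ge> T \<longrightarrow> \<bar>ln (gd f 1 b) - ln (gd f 1 a)\<bar> \<le> \<bar>b - a\<bar>))"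

lemma TT: "TT > f 0" "\<And>a b. a \<ge> TT \<Longrightarrow> b \<ge> TT \<Longrightarrow> \<bar>ln (gd f 1 b) - ln (gd f 1 a)\<bar> \<le> \<bar>b - a\<bar>"
proof -
  have "\<exists>T. T > f 0 \<and> (\<forall>a b. a \<ge> T \<longrightarrow> b \<ge> T \<longrightarrow> \<bar>ln (gd f 1 b) - ln (gd f 1 a)\<bar> \<le> \<bar>b - a\<bar>)"
    using loglip by blast
  hence "TT > f 0 \<and> (\<forall>a b. a \<ge> TT \<longrightarrow> b \<ge> TT \<longrightarrow> \<bar>ln (gd f 1 b) - ln (gd f 1 a)\<bar> \<le> \<bar>b - a\<bar>)"
    unfolding TT_def by (rule someI_ex)
  thus "TT > f 0" "\<And>a b. a \<ge> TT \<Longrightarrow> b \<ge> TT \<Longrightarrow> \<bar>ln (gd f 1 b) - ln (gd f 1 a)\<bar> \<le> \<bar>b - a\<bar>" by auto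
qed

lemma gd1_compare: assumes "a \<ge> TT" "b \<ge> TT" "\<bar>b - a\<bar> \<le> 1" shows "gd f 1 b \<ge> gd f 1 a / 3"
proof -
  have pa: "gd f 1 a > 0" and pb: "gd f 1 b > 0" using gd1_pos TT(1) assms by auto
  have "ln (gd f 1 b) \<ge> ln (gd f 1 a) - 1"
  proof -
    have "\<bar>ln (gd f 1 b) - ln (gd f 1 a)\<bar> \<le> 1" using TT(2)[OF assms(1,2)] assms(3) by linarith
    thus ?thesis by linarith
  qed
  hence "gd f 1 b \<ge> exp (ln (gd f 1 a) - 1)" using pb by (metis exp_le_cancel_iff exp_ln)
  also have "exp (ln (gd f 1 a) - 1) = gd f 1 a * exp (-1)" using pa by (simp add: exp_diff exp_minus field_simps)
  finally have "gd f 1 b \<ge> gd f 1 a * exp (-1)" .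
  moreover have "gd f 1 a * exp (-1) \<ge> gd f 1 a * (1/3)" using exp_m1_ge pa by (intro mult_left_mono) auto
  ultimately show ?thesis by simp
qed

lemma g_gap: assumes "a \<ge> TT" "a < b" "b \<le> a + 1"
  shows "g b - g a \<ge> (b - a) * (gd f 1 a / 3)" "g b - g a \<ge> (b - a) * (gd f 1 b / 3)"
proof -
  have dd: "\<And>s. a \<le> s \<Longrightarrow> s \<le> b \<Longrightarrow> (g has_real_derivative gd f 1 s) (at s)"
    using g_has_gd1 TT(1) assms by (meson less_le_trans order_trans)
  obtain z where z: "a < z" "z < b" "g b - g a = (b - a) * gd f 1 z" using MVT2[OF assms(2) dd] by blast
  have "gd f 1 z \<ge> gd f 1 a / 3" by (rule gd1_compare) (use z assms in auto)
  thus "g b - g a \<ge> (b - a) * (gd f 1 a / 3)" using z assms by (simp add: mult_left_mono)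
  have "gd f 1 z \<ge> gd f 1 b / 3" by (rule gd1_compare) (use z assms in auto)
  thus "g b - g a \<ge> (b - a) * (gd f 1 b / 3)" using z assms by (simp add: mult_left_mono)
qed

definition "Wt t = f (xt t)"

lemma P2: "((\<lambda>t. Wt t - Zt t) \<longlongrightarrow> 0) at_top"
proof (rule tendstoI)
  fix e :: real assume e: "e > 0"
  define \<delta> where "\<delta> = min e 1 / 2"
  have d: "\<delta> > 0" "\<delta> < e" "\<delta> \<le> 1" using e by (auto simp: \<delta>_def)
  obtain C where C: "C > 0" "eventually (\<lambda>t. \<bar>xt t - g (Zt t)\<bar> \<le> C * \<bar>gd f 2 t\<bar>) at_top"
    using err_bound by blast
  have E2: "eventually (\<lambda>t. \<bar>gd f 2 t / gd f 1 t\<bar> < \<delta> / (6 * C)) at_top"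
    using tendstoD[OF ratio0, of "\<delta> / (6 * C)"] d C by simp
  have E3: "eventually (\<lambda>t. gd f 1 t / gd f 1 (Zt t) < 2) at_top"
  proof -
    have "eventually (\<lambda>t. dist (gd f 1 t / gd f 1 (Zt t)) 1 < 1) at_top" using tendstoD[OF P0 zero_less_one] .
    thus ?thesis by (rule eventually_mono) (simp add: dist_real_def abs_less_iff)
  qed
  have E4: "eventually (\<lambda>t. Zt t \<ge> TT + 1) at_top"
    using Zt_lim by (simp add: filterlim_at_top)
  have E5: "eventually (\<lambda>t. xt t \<ge> 0) at_top"
    using xt_lim by (simp add: filterlim_at_top)
  show "eventually (\<lambda>t. dist (Wt t - Zt t) 0 < e) at_top"
    using C(2) E2 E3 E4 E5 eventually_gt_at_top[of "f 0"]
  proof eventually_elim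
    case (elim t)
    define Z where "Z = Zt t"
    define x where "x = xt t"
    have p: "gd f 1 t > 0" using gd1_pos elim(6) by simp
    have pZ: "gd f 1 Z > 0" using gd1_pos TT(1) elim(4) by (simp add: Z_def)
    have "\<bar>gd f 2 t\<bar> / gd f 1 t < \<delta> / (6 * C)" using elim(2) p by (simp add: abs_div)
    hence "\<bar>gd f 2 t\<bar> < \<delta> / (6 * C) * gd f 1 t" using p by (simp add: field_simps)
    hence "C * \<bar>gd f 2 t\<bar> < C * (\<delta> / (6 * C) * gd f 1 t)" by (rule mult_strict_left_mono[OF _ C(1)])
    also have "\<dots> = \<delta> / 6 * gd f 1 t" using C(1) by simp
    also have "\<dots> \<le> \<delta> / 6 * (2 * gd f 1 Z)"
    proof -
      have "gd f 1 t < 2 * gd f 1 Z" using elim(3) pZ by (simp add: Z_def field_simps)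
      thus ?thesis using d by (intro mult_left_mono) auto
    qed
    finally have err: "\<bar>x - g Z\<bar> < \<delta> * (gd f 1 Z / 3)" using elim(1) by (simp add: x_def Z_def)
    have Zb: "Z \<ge> TT + 1" using elim(4) by (simp add: Z_def)
    have up: "g (Z + \<delta>) - g Z \<ge> \<delta> * (gd f 1 Z / 3)"
      using g_gap(1)[of Z "Z + \<delta>"] Zb d by simp
    have lo: "g Z - g (Z - \<delta>) \<ge> \<delta> * (gd f 1 Z / 3)"
      using g_gap(2)[of "Z - \<delta>" Z] Zb d by simp
    have ab1: "x - g Z \<le> \<bar>x - g Z\<bar>" "- (x - g Z) \<le> \<bar>x - g Z\<bar>" by simp_all
    have x1: "x < g (Z + \<delta>)" using err up ab1 by linarith
    have x2: "g (Z - \<delta>) < x" using err lo ab1 by linarith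
    have x0: "x \<ge> 0" using elim(5) by (simp add: x_def)
    have f0a: "Z + \<delta> \<ge> f 0" "Z - \<delta> \<ge> f 0" using Zb TT(1) d by auto
    have "f x < f (g (Z + \<delta>))" using f_less[OF x0 x1] .
    hence w1: "f x < Z + \<delta>" using f_g[OF f0a(1)] by simp
    have "f (g (Z - \<delta>)) < f x" using f_less[OF g_nonneg[OF f0a(2)] x2] .
    hence w2: "Z - \<delta> < f x" using f_g[OF f0a(2)] by simp
    have "\<bar>Wt t - Zt t\<bar> < \<delta>" using w1 w2 by (simp add: Wt_def x_def Z_def abs_less_iff)
    thus ?case using d by (simp add: dist_real_def)
  qed
qed

lemma P3: "((\<lambda>t. gd f 1 (Wt t) / gd f 1 t) \<longlongrightarrow> 1) at_top"
proof -
  have E1: "eventually (\<lambda>t. \<bar>Wt t - Zt t\<bar> < 1) at_top"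
    using tendstoD[OF P2, of 1] by (simp add: dist_real_def)
  have E4: "eventually (\<lambda>t. Zt t \<ge> TT + 1) at_top"
    using Zt_lim by (simp add: filterlim_at_top)
  have ev: "eventually (\<lambda>t. norm (ln (gd f 1 (Wt t)) - ln (gd f 1 (Zt t))) \<le> norm (Wt t - Zt t) * 1) at_top"
    using E1 E4
  proof eventually_elim
    case (elim t)
    have "Wt t \<ge> TT" "Zt t \<ge> TT" using elim by (auto simp: abs_less_iff)
    thus ?case using TT(2)[of "Zt t" "Wt t"] by simp
  qed
  have l1: "((\<lambda>t. ln (gd f 1 (Wt t)) - ln (gd f 1 (Zt t))) \<longlongrightarrow> 0) at_top"
    by (rule tendsto_0_le[OF P2 ev])
  have l2: "((\<lambda>t. exp (ln (gd f 1 (Wt t)) - ln (gd f 1 (Zt t)))) \<longlongrightarrow> exp 0) at_top"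
    by (rule tendsto_exp[OF l1])
  have ev2: "eventually (\<lambda>t. exp (ln (gd f 1 (Wt t)) - ln (gd f 1 (Zt t))) = gd f 1 (Wt t) / gd f 1 (Zt t)) at_top"
    using E1 E4
  proof eventually_elim
    case (elim t)
    have "Wt t > f 0" "Zt t > f 0" using elim TT(1) by (auto simp: abs_less_iff)
    hence "gd f 1 (Wt t) > 0" "gd f 1 (Zt t) > 0" using gd1_pos by auto
    thus ?case by (simp add: exp_diff)
  qed
  have l3: "((\<lambda>t. gd f 1 (Wt t) / gd f 1 (Zt t)) \<longlongrightarrow> 1) at_top"
    using tendsto_cong[OF ev2] l2 by simp
  have l4: "((\<lambda>t. inverse (gd f 1 t / gd f 1 (Zt t))) \<longlongrightarrow> inverse 1) at_top"
    by (rule tendsto_inverse[OF P0]) simp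
  have l5: "((\<lambda>t. gd f 1 (Wt t) / gd f 1 (Zt t) * inverse (gd f 1 t / gd f 1 (Zt t))) \<longlongrightarrow> 1 * inverse 1) at_top"
    by (rule tendsto_mult[OF l3 l4])
  have ev3: "eventually (\<lambda>t. gd f 1 (Wt t) / gd f 1 (Zt t) * inverse (gd f 1 t / gd f 1 (Zt t)) = gd f 1 (Wt t) / gd f 1 t) at_top"
    using E4 eventually_gt_at_top[of "f 0"]
  proof eventually_elim
    case (elim t)
    have "gd f 1 (Zt t) > 0" using gd1_pos elim TT(1) by simp
    thus ?case by (simp add: field_simps)
  qed
  show ?thesis using tendsto_cong[OF ev3] l5 by simp
qed

end


lemma alg1: "(c::real) \<noteq> 0 \<Longrightarrow> Z = A + t + c * L \<Longrightarrow> - (t + A) / c = - Z / c + L"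
  by (simp add: field_simps)

lemma alg2: "(c::real) \<noteq> 0 \<Longrightarrow> (Z - W) / c = - W / c - (- Z / c)"
  by (simp add: field_simps)

lemma alg3: "(c::real) \<noteq> 0 \<Longrightarrow> eZ \<noteq> 0 \<Longrightarrow> g1 \<noteq> 0 \<Longrightarrow> p \<noteq> 0 \<Longrightarrow>
   (c * eW * gW) / (c * eZ * (g1 * p)) = (eW / eZ) * (gW / g1) / p"
  by (simp add: field_simps)

context tctx begin

lemma P4: "((\<lambda>t. Fc (xt t) / (KK * rr t powr (\<theta> / (\<beta> + 1)))) \<longlongrightarrow> 1) at_top"
proof -
  have lA: "((\<lambda>t. Fc (xt t) / GG (xt t)) \<longlongrightarrow> 1) at_top"
    using filterlim_compose[OF FG_lim xt_lim] .
  have E5: "eventually (\<lambda>t. xt t > 0) at_top" using xt_lim by (simp add: filterlim_at_top_dense)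
  have c0: "\<beta> + 1 \<noteq> 0" using b1 by simp
  have evB: "eventually (\<lambda>t. GG (xt t) / (KK * rr t powr (\<theta> / (\<beta> + 1)))
      = exp ((Zt t - Wt t) / (\<beta> + 1)) * (gd f 1 (Wt t) / gd f 1 t) / (1 + qq t)) at_top"
    using E5 LL_eq eventually_gt_at_top[of "f 0"]
  proof eventually_elim
    case (elim t)
    define x where "x = xt t"
    have x: "x > 0" using elim(1) by (simp add: x_def)
    have fx: "f x > f 0" using f_less x by simp
    have W: "Wt t = f x" by (simp add: Wt_def x_def)
    have gW: "gd f 1 (Wt t) = 1 / D 1 x" using gd1_eq[OF fx] g_f x W by simp
    have g1: "GG (xt t) = (\<beta> + 1) * exp (- Wt t / (\<beta> + 1)) * gd f 1 (Wt t)"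
      unfolding gW by (simp add: GG_def ee_def x_def W)
    have p1: "gd f 1 t > 0" using gd1_pos elim(3) by simp
    have q1: "1 + qq t > 0" using elim(2) by simp
    have L: "LL t = ln (gd f 1 t) + ln (1 + qq t)" using elim(2) by simp
    have h: "- (t + AA) / (\<beta> + 1) = - Zt t / (\<beta> + 1) + LL t" by (rule alg1[OF c0 Z_eq])
    have eL: "exp (LL t) = gd f 1 t * (1 + qq t)" unfolding L exp_add using p1 q1 by simp
    have "exp (- (t + AA) / (\<beta> + 1)) = exp (- Zt t / (\<beta> + 1)) * exp (LL t)"
      by (simp only: h exp_add)
    hence "exp (- (t + AA) / (\<beta> + 1)) = exp (- Zt t / (\<beta> + 1)) * (gd f 1 t * (1 + qq t))"
      unfolding eL .
    hence k1: "KK * rr t powr (\<theta> / (\<beta> + 1)) = (\<beta> + 1) * exp (- Zt t / (\<beta> + 1)) * (gd f 1 t * (1 + qq t))"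
      using Kid by simp
    have "GG (xt t) / (KK * rr t powr (\<theta> / (\<beta> + 1)))
       = (exp (- Wt t / (\<beta> + 1)) / exp (- Zt t / (\<beta> + 1))) * (gd f 1 (Wt t) / gd f 1 t) / (1 + qq t)"
      unfolding g1 k1 by (rule alg3) (use c0 p1 q1 in auto)
    also have "exp (- Wt t / (\<beta> + 1)) / exp (- Zt t / (\<beta> + 1)) = exp ((Zt t - Wt t) / (\<beta> + 1))"
      unfolding alg2[OF c0] by (simp only: exp_diff)
    finally show ?case .
  qed
  have lZW: "((\<lambda>t. (Zt t - Wt t) / (\<beta> + 1)) \<longlongrightarrow> - 0 / (\<beta> + 1)) at_top"
  proof -
    have "((\<lambda>t. - (Wt t - Zt t)) \<longlongrightarrow> - 0) at_top" by (rule tendsto_minus[OF P2])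
    hence "((\<lambda>t. Zt t - Wt t) \<longlongrightarrow> - 0) at_top" by simp
    thus ?thesis by (rule tendsto_divide[OF _ tendsto_const]) (use c0 in simp)
  qed
  have lB: "((\<lambda>t. exp ((Zt t - Wt t) / (\<beta> + 1)) * (gd f 1 (Wt t) / gd f 1 t) / (1 + qq t))
      \<longlongrightarrow> exp (- 0 / (\<beta> + 1)) * 1 / (1 + 0)) at_top"
    by (intro tendsto_divide tendsto_mult tendsto_exp lZW P3 tendsto_add tendsto_const qq_lim) simp
  have lB': "((\<lambda>t. GG (xt t) / (KK * rr t powr (\<theta> / (\<beta> + 1)))) \<longlongrightarrow> 1) at_top"
    using tendsto_cong[OF evB] lB by simp
  have lAB: "((\<lambda>t. Fc (xt t) / GG (xt t) * (GG (xt t) / (KK * rr t powr (\<theta> / (\<beta> + 1))))) \<longlongrightarrow> 1 * 1) at_top"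
    by (rule tendsto_mult[OF lA lB'])
  have ev: "eventually (\<lambda>t. Fc (xt t) / GG (xt t) * (GG (xt t) / (KK * rr t powr (\<theta> / (\<beta> + 1))))
     = Fc (xt t) / (KK * rr t powr (\<theta> / (\<beta> + 1)))) at_top"
    using E5
  proof eventually_elim
    case (elim t)
    have "GG (xt t) > 0" using GG_pos elim by simp
    thus ?case by simp
  qed
  show ?thesis using tendsto_cong[OF ev] lAB by simp
qed

end



context tctx begin

lemma KK_pos: "KK > 0"
proof -
  have "\<alpha> - \<beta> - 1 > 0" using abg by simp
  hence "(\<alpha> - \<beta> - 1) powr (- 1 / (\<beta> + 1)) > 0" by simp
  moreover have "(\<beta> + 1) / \<theta> > 0" using b1 thpos by simp
  ultimately have "(\<beta> + 1) / \<theta> * (\<alpha> - \<beta> - 1) powr (- 1 / (\<beta> + 1)) > 0"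
    by (rule mult_pos_pos[rotated])
  thus ?thesis unfolding KK_def .
qed

lemma final: "\<exists>\<delta> :: real \<Rightarrow> real. (\<delta> \<longlongrightarrow> 0) (at_right 0) \<and>
    (\<forall>\<^sub>F r in at_right 0.
       u (r * lam powr (- 1 / theta \<alpha> \<beta> \<gamma>)) =
       the_inv_into {0..} (Fcal f \<beta>)
         ((\<beta> + 1) / theta \<alpha> \<beta> \<gamma> * (\<alpha> - \<beta> - 1) powr (- 1 / (\<beta> + 1))
           * r powr (theta \<alpha> \<beta> \<gamma> / (\<beta> + 1)) * (1 + \<delta> r)))"
proof -
  have th: "\<theta> > 0" using thpos by simp
  define \<tau> where "\<tau> r = ln (\<beta> + 1) + \<theta> * (- ln r)" for r
  define \<delta> where "\<delta> r = Fc (u (r * lam powr (- 1 / \<theta>))) / (KK * r powr (\<theta> / (\<beta> + 1))) - 1" for r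
  have tau_lim: "filterlim \<tau> at_top (at_right 0)"
  proof -
    have "LIM r at_right 0. - ln (r::real) :> at_top" using ln_at_0 by (rule filterlim_uminus_at_bot[THEN iffD1])
    hence "LIM r at_right 0. \<theta> * (- ln (r::real)) :> at_top"
      by (rule filterlim_tendsto_pos_mult_at_top[OF tendsto_const th])
    hence "LIM r at_right 0. ln (\<beta> + 1) + \<theta> * (- ln (r::real)) :> at_top"
      by (rule filterlim_tendsto_add_at_top[OF tendsto_const])
    thus ?thesis unfolding \<tau>_def[abs_def] .
  qed
  have rr_tau: "rr (\<tau> r) = r" if "r > 0" for r
  proof -
    have "(ln (\<beta> + 1) - \<tau> r) / \<theta> = ln r" using th by (simp add: \<tau>_def field_simps)
    thus ?thesis using that by (simp add: rr_def)
  qed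
  have rho_tau: "rho (\<tau> r) = r * lam powr (- 1 / \<theta>)" if "r > 0" for r
  proof -
    have "(ln (\<beta> + 1) - ln lam - \<tau> r) / \<theta> = ln r + (- 1 / \<theta>) * ln lam" using th by (simp add: \<tau>_def field_simps)
    hence "rho (\<tau> r) = exp (ln r + (- 1 / \<theta>) * ln lam)" by (simp only: rho_def)
    hence "rho (\<tau> r) = exp (ln r) * exp ((- 1 / \<theta>) * ln lam)" by (simp only: exp_add)
    thus ?thesis using that lampos by (simp add: powr_def)
  qed
  have ev_pos: "eventually (\<lambda>r::real. r > 0) (at_right 0)" by (rule eventually_at_right_less)
  have lim1: "((\<lambda>r. Fc (xt (\<tau> r)) / (KK * rr (\<tau> r) powr (\<theta> / (\<beta> + 1)))) \<longlongrightarrow> 1) (at_right 0)"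
    using filterlim_compose[OF P4 tau_lim] .
  have evd: "eventually (\<lambda>r. Fc (xt (\<tau> r)) / (KK * rr (\<tau> r) powr (\<theta> / (\<beta> + 1))) - 1 = \<delta> r) (at_right 0)"
    using ev_pos by (rule eventually_mono) (simp add: \<delta>_def xt_def rr_tau rho_tau)
  have dlim: "(\<delta> \<longlongrightarrow> 0) (at_right 0)"
  proof -
    have "((\<lambda>r. Fc (xt (\<tau> r)) / (KK * rr (\<tau> r) powr (\<theta> / (\<beta> + 1))) - 1) \<longlongrightarrow> 1 - 1) (at_right 0)"
      by (rule tendsto_diff[OF lim1 tendsto_const])
    thus ?thesis using tendsto_cong[OF evd] by simp
  qed
  have mlim: "filterlim (\<lambda>r::real. r * lam powr (- 1 / \<theta>)) (at_right 0) (at_right 0)"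
  proof (rule tendsto_imp_filterlim_at_right)
    have "((\<lambda>r::real. r * lam powr (- 1 / \<theta>)) \<longlongrightarrow> 0 * lam powr (- 1 / \<theta>)) (at_right 0)"
      by (intro tendsto_mult tendsto_const tendsto_ident_at)
    thus "((\<lambda>r::real. r * lam powr (- 1 / \<theta>)) \<longlongrightarrow> 0) (at_right 0)" by simp
    show "eventually (\<lambda>r::real. r * lam powr (- 1 / \<theta>) > 0) (at_right 0)"
      using ev_pos by (rule eventually_mono) (use lampos in simp)
  qed
  have ev_u: "eventually (\<lambda>r. u (r * lam powr (- 1 / \<theta>)) \<ge> 0) (at_right 0)"
    using filterlim_compose[OF uinf mlim] by (simp add: filterlim_at_top)
  have Feq: "Fcal f \<beta> = Fc" by (simp add: fun_eq_iff Fcal_def Fc_def ee_def)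
  have "\<forall>\<^sub>F r in at_right 0. u (r * lam powr (- 1 / \<theta>)) =
       the_inv_into {0..} (Fcal f \<beta>) (KK * r powr (\<theta> / (\<beta> + 1)) * (1 + \<delta> r))"
    using ev_pos ev_u
  proof eventually_elim
    case (elim r)
    define x where "x = u (r * lam powr (- 1 / \<theta>))"
    have nz: "KK * r powr (\<theta> / (\<beta> + 1)) \<noteq> 0" using KK_pos elim(1) by simp
    have "KK * r powr (\<theta> / (\<beta> + 1)) * (1 + \<delta> r) = Fc x"
      using nz by (simp add: \<delta>_def x_def)
    moreover have "the_inv_into {0..} Fc (Fc x) = x"
      by (rule the_inv_into_f_f[OF Fc_inj]) (use elim(2) in \<open>simp add: x_def\<close>)
    ultimately show ?case unfolding Feq by (simp add: x_def)
  qed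
  thus ?thesis using dlim by (intro exI[of _ \<delta>]) (simp add: KK_def)
qed

end


theorem mainTheorem18:
  fixes f :: "real \<Rightarrow> real" and \<alpha> \<beta> \<gamma> lam :: real and u :: "real \<Rightarrow> real"
  assumes "assumptions_A f \<alpha> \<beta> \<gamma>"
    and "singular_solution_thm11 f \<alpha> \<beta> \<gamma> lam u"
  shows "\<exists>\<delta> :: real \<Rightarrow> real. (\<delta> \<longlongrightarrow> 0) (at_right 0) \<and>
    (\<forall>\<^sub>F r in at_right 0.
       u (r * lam powr (- 1 / theta \<alpha> \<beta> \<gamma>)) =
       the_inv_into {0..} (Fcal f \<beta>)
         ((\<beta> + 1) / theta \<alpha> \<beta> \<gamma> * (\<alpha> - \<beta> - 1) powr (- 1 / (\<beta> + 1))
           * r powr (theta \<alpha> \<beta> \<gamma> / (\<beta> + 1)) * (1 + \<delta> r)))"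
proof -
  from assms(1) obtain D where D: "C_n_on 4 {0..} f D" "\<forall>x\<ge>0. D 1 x > 0"
    unfolding assumptions_A_def by blast
  have "tctx f D \<beta> \<alpha> \<gamma> lam u"
    unfolding tctx_def tctx_axioms_def bctx_def bctx_axioms_def mctx_def mctx_axioms_def fctx_def
    using assms D by (auto simp: assumptions_A_def singular_solution_thm11_def)
  then show ?thesis by (rule tctx.final)
qed

end
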